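(* For each $n$, let $A$ be the symmetric, hollow, binary adjacency matrix of a random simple undirected graph on $[n]$ whose vertex set is partitioned into known nonempty blocks $\mathcal{B}_1,\dots,\mathcal{B}_{K^*}$; for $1\le\ell,k\le K^*$ let $\mathcal{B}_{\ell,k}=\mathcal{B}_\ell\times\mathcal{B}_k$ if $\ell\ne k$, $\mathcal{B}_{\ell,\ell}=\binom{\mathcal{B}_\ell}{2}$, $n_{\ell,k}=|\mathcal{B}_{\ell,k}|$, and $n_{**}=\min_{\ell,k}n_{\ell,k}$. Let $\Gamma$ be a finite index set and, for each $\gamma\in\Gamma$, $\gamma_B$ a nonempty set of unordered block pairs $\{\ell,k\}$ ($\ell=k$ allowed) such that $\{\gamma_B\}_{\gamma\in\Gamma}$ partitions the $((K^* )^2+K^* )/2$ unordered pairs $\{\ell,k\}$, $1\le \ell\le k\le K^*$; let $n_\gamma=\sum_{\{\ell,k\}\in\gamma_B}n_{\ell,k}$. Assume the null model $H_0$ holds: there are $B^{(0)}_\gamma\in(0,1)$ such that all $A_{v,v'}$ with $(v,v')\in\mathcal{B}_{\ell,k}$, $\{\ell,k\}\in\gamma_B$, are independent $\operatorname{Bern}(B^{(0)}_\gamma)$; write $\mathbb{P}_0$ for its probability and $B^{(1)}_{\ell,k}=B^{(0)}_\gamma$ for $\{\ell,k\}\in\gamma_B$ for the resulting block connection probabilities. Assume there exist $n_0$ and $c_1\in(0,1/2)$ such that for all $n>n_0$ and all pairs $\{\ell,k\}$, $$B^{(1)}_{\ell,k}>\frac{\log n_{\ell,k}}{n_{\ell,k}}\quad\text{and}\quad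 B^{(1)}_{\ell,k}<\tfrac12-c_1.$$ Define $\widehat{B}^{(1)}_{\ell,k}=\frac{1}{n_{\ell,k}}\sum_{(v,v')\in\mathcal{B}_{\ell,k}}A_{v,v'}$, $\widehat{B}^{(0)}_{\gamma}=\frac{1}{n_{\gamma}}\sum_{\{\ell,k\}\in\gamma_B}\sum_{(v,v')\in\mathcal{B}_{\ell,k}}A_{v,v'}$, $$-2\widehat\lambda_T=2\sum_{\gamma\in\Gamma}\sum_{\{\ell,k\}\in\gamma_B}n_{\ell,k}\left[\widehat B^{(1)}_{\ell,k}\log\left(\frac{\widehat B^{(1)}_{\ell,k}(1-\widehat B^{(0)}_\gamma)}{\widehat B^{(0)}_\gamma(1-\widehat B^{(1)}_{\ell,k})}\right)+\log\left(\frac{1-\widehat B^{(1)}_{\ell,k}}{1-\widehat B^{(0)}_\gamma}\right)\right],$$ and $$\widehat\Delta_{T,\mathrm{BIC}}=-2\widehat\lambda_T-\Big(\sum_{\gamma\in\Gamma}(|\gamma_B|-1)\Big)\log\binom{n}{2}.$$ Let $c_2$ be a constant with $0<c_2\leq \frac{1}{16}\left(1-\frac{2|\Gamma|}{(K^* )^2+K^*}\right)$. Then for all $n$ sufficiently large, $$\mathbb{P}_{0}\left[\widehat{\Delta}_{T,\mathrm{BIC}}<0\right]\geq 1-O\left(\exp\left\{-((K^* )^2+K^* )-\frac{c_2\log n_{**}}{2+2\sqrt{c_2}/3}\right\}\right).$$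
   Context: $\widehat\Delta_{T,\mathrm{BIC}}$ is the difference of BIC-penalized (negative twice log) maximized likelihoods between the tied repeated-motif hierarchical SBM (parameters indexed by $\Gamma$) and the full $K^*$-block SBM with the same known block partition; a negative value favors the tied model. The asymptotics are as $n\to\infty$, with the block structure and parameters allowed to depend on $n$. The summands of $-2\widehat\lambda_T$ are $2n_{\ell,k}$ times the Kullback–Leibler divergence between $\operatorname{Bern}(\widehat B^{(1)}_{\ell,k})$ and $\operatorname{Bern}(\widehat B^{(0)}_\gamma)$. *)

theory Defs
  imports "HOL-Probability.Probability"
begin

(* Vertices are {0..<n}; b :: nat => nat assigns vertices to blocks {0..<K}. *)
definition block :: "(nat \<Rightarrow> nat) \<Rightarrow> nat \<Rightarrow> nat \<Rightarrow> nat set" where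
  "block b n l = {v. v < n \<and> b v = l}"

definition block_pairs :: "(nat \<Rightarrow> nat) \<Rightarrow> nat \<Rightarrow> nat \<Rightarrow> nat \<Rightarrow> (nat \<times> nat) set" where
  "block_pairs b n l k =
     (if l = k then {(v, v'). v \<in> block b n l \<and> v' \<in> block b n l \<and> v < v'}
      else block b n l \<times> block b n k)"

definition npair :: "(nat \<Rightarrow> nat) \<Rightarrow> nat \<Rightarrow> nat \<Rightarrow> nat \<Rightarrow> nat" where
  "npair b n l k = card (block_pairs b n l k)"

(* unordered block pairs {l,k}, represented as (l,k) with l <= k < K *)
definition upairs :: "nat \<Rightarrow> (nat \<times> nat) set" where
  "upairs K = {(l, k). l \<le> k \<and> k < K}"

definition nmin :: "(nat \<Rightarrow> nat) \<Rightarrow> nat \<Rightarrow> nat \<Rightarrow> nat" where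
  "nmin b n K = Min ((\<lambda>(l, k). npair b n l k) ` upairs K)"

(* potential edges {v,v'} of a simple graph on [n], as pairs v < v' *)
definition edges :: "nat \<Rightarrow> (nat \<times> nat) set" where
  "edges n = {(v, v'). v < v' \<and> v' < n}"

definition adj :: "(nat \<times> nat \<Rightarrow> bool) \<Rightarrow> nat \<Rightarrow> nat \<Rightarrow> real" where
  "adj \<omega> v v' = (if v = v' then 0 else if \<omega> (min v v', max v v') then 1 else 0)"

definition motif_class :: "(nat \<times> nat \<Rightarrow> 'g) \<Rightarrow> nat \<Rightarrow> 'g \<Rightarrow> (nat \<times> nat) set" where
  "motif_class g K \<gamma> = {lk \<in> upairs K. g lk = \<gamma>}"

definition n_gamma :: "(nat \<Rightarrow> nat) \<Rightarrow> nat \<Rightarrow> (nat \<times> nat \<Rightarrow> 'g) \<Rightarrow> nat \<Rightarrow> 'g \<Rightarrow> nat" where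
  "n_gamma b n g K \<gamma> = (\<Sum>(l, k)\<in>motif_class g K \<gamma>. npair b n l k)"

definition Bhat1 :: "(nat \<Rightarrow> nat) \<Rightarrow> nat \<Rightarrow> (nat \<times> nat \<Rightarrow> bool) \<Rightarrow> nat \<Rightarrow> nat \<Rightarrow> real" where
  "Bhat1 b n \<omega> l k =
     (\<Sum>(v, v')\<in>block_pairs b n l k. adj \<omega> v v') / real (npair b n l k)"

definition Bhat0 :: "(nat \<Rightarrow> nat) \<Rightarrow> nat \<Rightarrow> (nat \<times> nat \<Rightarrow> 'g) \<Rightarrow> nat \<Rightarrow> (nat \<times> nat \<Rightarrow> bool) \<Rightarrow> 'g \<Rightarrow> real" where
  "Bhat0 b n g K \<omega> \<gamma> =
     (\<Sum>(l, k)\<in>motif_class g K \<gamma>. \<Sum>(v, v')\<in>block_pairs b n l k. adj \<omega> v v')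
       / real (n_gamma b n g K \<gamma>)"

(* KL divergence between Bern(p) and Bern(q), with the convention 0 log 0 = 0 *)
definition bern_kl :: "real \<Rightarrow> real \<Rightarrow> real" where
  "bern_kl p q = (if p = 0 then 0 else p * ln (p / q))
               + (if p = 1 then 0 else (1 - p) * ln ((1 - p) / (1 - q)))"

definition neg2lambda :: "(nat \<Rightarrow> nat) \<Rightarrow> nat \<Rightarrow> (nat \<times> nat \<Rightarrow> 'g) \<Rightarrow> nat \<Rightarrow> (nat \<times> nat \<Rightarrow> bool) \<Rightarrow> real" where
  "neg2lambda b n g K \<omega> =
     2 * (\<Sum>\<gamma>\<in>g ` upairs K. \<Sum>(l, k)\<in>motif_class g K \<gamma>.
            real (npair b n l k) * bern_kl (Bhat1 b n \<omega> l k) (Bhat0 b n g K \<omega> \<gamma>))"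

definition Delta_BIC :: "(nat \<Rightarrow> nat) \<Rightarrow> nat \<Rightarrow> (nat \<times> nat \<Rightarrow> 'g) \<Rightarrow> nat \<Rightarrow> (nat \<times> nat \<Rightarrow> bool) \<Rightarrow> real" where
  "Delta_BIC b n g K \<omega> =
     neg2lambda b n g K \<omega>
     - (\<Sum>\<gamma>\<in>g ` upairs K. real (card (motif_class g K \<gamma>)) - 1) * ln (real (n choose 2))"

definition null_law :: "(nat \<Rightarrow> nat) \<Rightarrow> (nat \<times> nat \<Rightarrow> 'g) \<Rightarrow> ('g \<Rightarrow> real) \<Rightarrow> nat \<Rightarrow> (nat \<times> nat \<Rightarrow> bool) pmf" where
  "null_law b g p n = Pi_pmf (edges n) False
     (\<lambda>(v, v'). bernoulli_pmf (p (g (min (b v) (b v'), max (b v) (b v')))))"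

end

theory Submission
  imports Defs
begin


lemma pow_exp_ln: "0 < (x::real) \<Longrightarrow> x ^ k = exp (real k * ln x)"
  by (simp add: exp_ln ln_realpow[symmetric])

lemma tilt:
  fixes n a k :: nat and p :: real
  assumes p: "0<p" "p<1" and kn: "k \<le> n" and an: "a \<le> n" and n0: "0<n"
    and cond: "(a \<le> k \<and> p \<le> real a / n) \<or> (k \<le> a \<and> real a / n \<le> p)"
  shows "p^k * (1-p)^(n-k) \<le> exp(-(n * bern_kl (a/n) p)) * (a/n)^k * (1-a/n)^(n-k)"
proof -
  consider "a = 0" | "a = n" | "0 < a \<and> a < n" using an by linarith
  then show ?thesis
  proof cases
    case 1
    then have "k = 0" using cond p by auto
    have "exp(-(n * bern_kl (a/n) p)) = (1-p)^n"
      using 1 p by (simp add: bern_kl_def pow_exp_ln ln_div)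
    then show ?thesis using 1 \<open>k=0\<close> by simp
  next
    case 2
    then have "k = n" using cond p kn n0 by auto
    have "exp(-(n * bern_kl (a/n) p)) = p^n"
      using 2 p n0 by (simp add: bern_kl_def pow_exp_ln ln_div)
    then show ?thesis using 2 \<open>k=n\<close> n0 by simp
  next
    case 3
    define q where "q = real a / n"
    have q: "0 < q" "q < 1" using 3 n0 by (auto simp: q_def field_simps)
    have nq: "real n * q = a" using n0 by (simp add: q_def)
    have kl: "real n * bern_kl q p = a * (ln q - ln p) + (real n - a) * (ln (1-q) - ln (1-p))"
    proof -
      have "real n * bern_kl q p = (real n*q) * (ln q - ln p) + (real n - real n*q) * (ln (1-q) - ln (1-p))"
        using q p unfolding bern_kl_def by (simp add: ln_div algebra_simps)
      then show ?thesis using nq by simp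
    qed
    have key: "0 \<le> (real k - a) * ((ln q - ln p) - (ln (1-q) - ln (1-p)))"
    proof (cases "a \<le> k \<and> p \<le> q")
      case True
      then have "ln p \<le> ln q" "ln (1-q) \<le> ln (1-p)" using p q by auto
      then show ?thesis using True by (intro mult_nonneg_nonneg) auto
    next
      case False
      then have c: "k \<le> a" "q \<le> p" using cond q_def by auto
      then have "ln q \<le> ln p" "ln (1-p) \<le> ln (1-q)" using p q by auto
      then show ?thesis using c by (intro mult_nonpos_nonpos) auto
    qed
    have "p^k * (1-p)^(n-k) = exp (k * ln p + (real n - k) * ln (1-p))"
      using p kn by (simp add: pow_exp_ln exp_add of_nat_diff)
    also have "\<dots> \<le> exp (-(real n * bern_kl q p) + k * ln q + (real n - k) * ln (1-q))"
      using key unfolding kl by (intro exp_le_cancel_iff[THEN iffD2]) (simp add: algebra_simps)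
    also have "\<dots> = exp(-(n * bern_kl q p)) * q^k * (1-q)^(n-k)"
      using q kn by (simp add: pow_exp_ln exp_add of_nat_diff exp_diff exp_minus field_simps)
    finally show ?thesis by (simp add: q_def)
  qed
qed

lemma binom_total: "(\<Sum>k\<le>n. real (n choose k) * q^k * (1-q)^(n-k)) = 1"
  using binomial_ring[of q "1-q" n] by simp

lemma chernoff:
  fixes n a :: nat and p :: real and A :: "nat set"
  assumes p: "0<p" "p<1" and an: "a \<le> n" and n0: "0<n" and A: "A \<subseteq> {..n}"
    and cond: "\<And>k. k \<in> A \<Longrightarrow> (a \<le> k \<and> p \<le> real a / n) \<or> (k \<le> a \<and> real a / n \<le> p)"
  shows "(\<Sum>k\<in>A. real (n choose k) * p^k * (1-p)^(n-k)) \<le> exp(-(n * bern_kl (a/n) p))"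
proof -
  define q where "q = real a / n"
  have q: "0 \<le> q" "q \<le> 1" using an n0 by (auto simp: q_def field_simps)
  have "(\<Sum>k\<in>A. real (n choose k) * p^k * (1-p)^(n-k))
      \<le> (\<Sum>k\<in>A. real (n choose k) * (exp(-(n * bern_kl q p)) * q^k * (1-q)^(n-k)))"
  proof (rule sum_mono)
    fix k assume k: "k \<in> A"
    have "p^k * (1-p)^(n-k) \<le> exp(-(n * bern_kl q p)) * q^k * (1-q)^(n-k)"
      using tilt[OF p _ an n0 cond[OF k]] k A unfolding q_def by auto
    then show "real (n choose k) * p^k * (1-p)^(n-k) \<le> real (n choose k) * (exp(-(n * bern_kl q p)) * q^k * (1-q)^(n-k))"
      by (simp add: mult.assoc mult_left_mono)
  qed
  also have "\<dots> = exp(-(n * bern_kl q p)) * (\<Sum>k\<in>A. real (n choose k) * q^k * (1-q)^(n-k))"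
    by (simp add: sum_distrib_left algebra_simps)
  also have "\<dots> \<le> exp(-(n * bern_kl q p)) * (\<Sum>k\<le>n. real (n choose k) * q^k * (1-q)^(n-k))"
    using q A by (intro mult_left_mono sum_mono2) auto
  also have "\<dots> = exp(-(n * bern_kl q p))" by (simp add: binom_total)
  finally show ?thesis by (simp add: q_def)
qed

lemma tail:
  fixes n :: nat and p t :: real
  assumes p: "0<p" "p<1"
  shows "(\<Sum>k\<in>{k. k \<le> n \<and> t \<le> n * bern_kl (k/n) p}. real (n choose k) * p^k * (1-p)^(n-k)) \<le> 2 * exp (-t)"
proof -
  define P where "P k = real (n choose k) * p^k * (1-p)^(n-k)" for k
  define S where "S = {k. k \<le> n \<and> t \<le> n * bern_kl (k/n) p}"
  have Pnn: "P k \<ge> 0" for k using p by (simp add: P_def)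
  have finS: "finite S" by (simp add: S_def)
  show ?thesis
  proof (cases "t \<le> 0 \<or> n = 0")
    case True
    show ?thesis
    proof (cases "t \<le> 0")
      case tle: True
      have "sum P S \<le> sum P {..n}" using Pnn by (intro sum_mono2) (auto simp: S_def)
      also have "\<dots> = 1" by (simp add: P_def binom_total)
      also have "1 \<le> 2 * exp (-t)"
      proof -
        have "1 \<le> exp (-t)" using tle by simp
        then show ?thesis by linarith
      qed
      finally show ?thesis by (simp add: P_def S_def)
    next
      case False
      then have "S = {}" using True by (auto simp: S_def)
      then have "sum P S = 0" by simp
      then show ?thesis by (simp add: P_def S_def)
    qed
  next
    case False
    then have t0: "t > 0" and n0: "n > 0" by auto
    define S1 where "S1 = {k \<in> S. p \<le> real k / n}"
    define S2 where "S2 = {k \<in> S. real k / n < p}"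
    have S12: "S = S1 \<union> S2" "S1 \<inter> S2 = {}" by (auto simp: S1_def S2_def)
    have fin12: "finite S1" "finite S2" using finS by (auto simp: S1_def S2_def)
    have b1: "sum P S1 \<le> exp (-t)"
    proof (cases "S1 = {}")
      case True then show ?thesis by simp
    next
      case False
      define a where "a = Min S1"
      have aS: "a \<in> S1" using False fin12 by (simp add: a_def)
      have amin: "\<And>k. k \<in> S1 \<Longrightarrow> a \<le> k" using fin12 by (simp add: a_def)
      have "sum P S1 \<le> exp(-(n * bern_kl (a/n) p))" unfolding P_def
        using aS amin by (intro chernoff[OF p _ n0]) (auto simp: S1_def S_def)
      also have "\<dots> \<le> exp (-t)" using aS by (simp add: S1_def S_def)
      finally show ?thesis .
    qed
    have b2: "sum P S2 \<le> exp (-t)"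
    proof (cases "S2 = {}")
      case True then show ?thesis by simp
    next
      case False
      define a where "a = Max S2"
      have aS: "a \<in> S2" using False fin12 by (simp add: a_def)
      have amax: "\<And>k. k \<in> S2 \<Longrightarrow> k \<le> a" using fin12 by (simp add: a_def)
      have "sum P S2 \<le> exp(-(n * bern_kl (a/n) p))" unfolding P_def
        using aS amax by (intro chernoff[OF p _ n0]) (auto simp: S2_def S_def)
      also have "\<dots> \<le> exp (-t)" using aS by (simp add: S2_def S_def)
      finally show ?thesis .
    qed
    have "sum P S = sum P S1 + sum P S2" using S12 fin12 by (simp add: sum.union_disjoint)
    then show ?thesis using b1 b2 by (simp add: P_def S_def)
  qed
qed

lemma disc_eq: "real J \<le> y \<Longrightarrow>
  exp(1/2) + (\<Sum>j\<in>{1..J}. (exp((real j+1)/2) - exp(real j/2)) * (if real j \<le> y then 1 else 0)) = exp((real J+1)/2)"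
proof (induction J)
  case 0 then show ?case by simp
next
  case (Suc J)
  then have "exp(1/2) + (\<Sum>j\<in>{1..J}. (exp((real j+1)/2) - exp(real j/2)) * (if real j \<le> y then 1 else 0)) = exp((real J+1)/2)"
    by simp
  then show ?case using Suc.prems by (simp add: algebra_simps)
qed

lemma disc: "y \<le> real J + 1 \<Longrightarrow>
  exp(y/2) \<le> exp(1/2) + (\<Sum>j\<in>{1..J}. (exp((real j+1)/2) - exp(real j/2)) * (if real j \<le> y then 1 else 0))"
proof (induction J)
  case 0 then show ?case by simp
next
  case (Suc J)
  show ?case
  proof (cases "y \<le> real J + 1")
    case True
    have "exp(y/2) \<le> exp(1/2) + (\<Sum>j\<in>{1..J}. (exp((real j+1)/2) - exp(real j/2)) * (if real j \<le> y then 1 else 0))"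
      using Suc.IH True by simp
    moreover have "0 \<le> (exp((real (Suc J)+1)/2) - exp(real (Suc J)/2)) * (if real (Suc J) \<le> y then 1 else 0)"
      by simp
    moreover have "(\<Sum>j\<in>{1..Suc J}. (exp((real j+1)/2) - exp(real j/2)) * (if real j \<le> y then 1 else 0))
      = (\<Sum>j\<in>{1..J}. (exp((real j+1)/2) - exp(real j/2)) * (if real j \<le> y then 1 else 0))
        + (exp((real (Suc J)+1)/2) - exp(real (Suc J)/2)) * (if real (Suc J) \<le> y then 1 else 0)"
      by (rule sum.cl_ivl_Suc[THEN trans]) simp
    ultimately show ?thesis by linarith
  next
    case False
    have "exp(1/2) + (\<Sum>j\<in>{1..Suc J}. (exp((real j+1)/2) - exp(real j/2)) * (if real j \<le> y then 1 else 0)) = exp((real (Suc J)+1)/2)"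
      using False by (intro disc_eq) simp
    moreover have "exp(y/2) \<le> exp((real (Suc J)+1)/2)" using Suc.prems by simp
    ultimately show ?thesis by simp
  qed
qed

lemma geom_half: "(\<Sum>j\<in>{1..J}. exp(-(real j/2))) * (exp(1/2) - 1) = 1 - exp(-(real J/2))"
proof (induction J)
  case 0 then show ?case by simp
next
  case (Suc J)
  have "exp(-(real (Suc J)/2)) * (exp(1/2) - 1) = exp(-(real J/2)) - exp(-(real (Suc J)/2))"
    by (simp add: algebra_simps flip: exp_add)
  then show ?case using Suc.IH by (simp add: algebra_simps)
qed

lemma mgf:
  fixes n :: nat and p :: real
  assumes p: "0<p" "p<1"
  shows "(\<Sum>k\<le>n. real (n choose k) * p^k * (1-p)^(n-k) * exp(n * bern_kl (k/n) p / 2)) \<le> 5"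
proof -
  define P where "P k = real (n choose k) * p^k * (1-p)^(n-k)" for k
  define Y where "Y k = n * bern_kl (k/n) p" for k :: nat
  define J where "J = nat \<lceil>\<Sum>k\<le>n. \<bar>Y k\<bar>\<rceil>"
  define w where "w j = exp((real j+1)/2) - exp(real j/2)" for j :: nat
  define ind where "ind j y = (if real j \<le> y then 1 else (0::real))" for j :: nat and y
  have Pnn: "P k \<ge> 0" for k using p by (simp add: P_def)
  have wnn: "w j \<ge> 0" for j by (simp add: w_def)
  have YJ: "Y k \<le> real J + 1" if "k \<le> n" for k
  proof -
    have "Y k \<le> \<bar>Y k\<bar>" by simp
    also have "\<dots> \<le> (\<Sum>k\<le>n. \<bar>Y k\<bar>)"
      using that by (intro member_le_sum) auto
    also have "\<dots> \<le> real J" unfolding J_def by linarith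
    finally show ?thesis by simp
  qed
  have "(\<Sum>k\<le>n. P k * exp(Y k / 2)) \<le> (\<Sum>k\<le>n. P k * (exp(1/2) + (\<Sum>j\<in>{1..J}. w j * ind j (Y k))))"
    using YJ disc Pnn unfolding w_def ind_def by (intro sum_mono mult_left_mono) auto
  also have "\<dots> = exp(1/2) * (\<Sum>k\<le>n. P k) + (\<Sum>j\<in>{1..J}. w j * (\<Sum>k\<le>n. P k * ind j (Y k)))"
  proof -
    have "(\<Sum>k\<le>n. P k * (exp(1/2) + (\<Sum>j\<in>{1..J}. w j * ind j (Y k))))
       = exp(1/2) * (\<Sum>k\<le>n. P k) + (\<Sum>k\<le>n. \<Sum>j\<in>{1..J}. w j * (P k * ind j (Y k)))"
      by (simp add: algebra_simps sum.distrib sum_distrib_left sum_distrib_right)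
    also have "(\<Sum>k\<le>n. \<Sum>j\<in>{1..J}. w j * (P k * ind j (Y k))) = (\<Sum>j\<in>{1..J}. \<Sum>k\<le>n. w j * (P k * ind j (Y k)))"
      by (rule sum.swap)
    finally show ?thesis by (simp add: sum_distrib_left)
  qed
  also have "(\<Sum>k\<le>n. P k) = 1" by (simp add: P_def binom_total)
  also have "(\<Sum>j\<in>{1..J}. w j * (\<Sum>k\<le>n. P k * ind j (Y k))) \<le> (\<Sum>j\<in>{1..J}. w j * (2 * exp (- real j)))"
  proof (intro sum_mono mult_left_mono wnn)
    fix j
    have "(\<Sum>k\<le>n. P k * ind j (Y k)) = (\<Sum>k\<in>{k. k \<le> n \<and> real j \<le> Y k}. P k)"
    proof -
      have "(\<Sum>k\<le>n. P k * ind j (Y k)) = (\<Sum>k\<le>n. if real j \<le> Y k then P k else 0)"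
        by (intro sum.cong) (auto simp: ind_def)
      also have "\<dots> = sum P {k\<in>{..n}. real j \<le> Y k}"
        by (rule sum.inter_filter[symmetric]) simp
      also have "{k\<in>{..n}. real j \<le> Y k} = {k. k \<le> n \<and> real j \<le> Y k}" by auto
      finally show ?thesis .
    qed
    also have "\<dots> \<le> 2 * exp (- real j)" unfolding P_def Y_def by (rule tail[OF p])
    finally show "(\<Sum>k\<le>n. P k * ind j (Y k)) \<le> 2 * exp (- real j)" .
  qed
  also have "(\<Sum>j\<in>{1..J}. w j * (2 * exp (- real j))) = 2 * ((\<Sum>j\<in>{1..J}. exp(-(real j/2))) * (exp(1/2) - 1))"
  proof -
    have wj: "w j * (2 * exp (- real j)) = 2 * (exp(-(real j/2)) * (exp(1/2) - 1))" for j
    proof -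
      have a: "exp((real j+1)/2) * exp (- real j) = exp(-(real j/2)) * exp(1/2)"
        unfolding exp_add[symmetric] by (rule arg_cong[where f=exp]) (simp add: field_simps)
      have b: "exp(real j/2) * exp (- real j) = exp(-(real j/2))"
        unfolding exp_add[symmetric] by (rule arg_cong[where f=exp]) (simp add: field_simps)
      show ?thesis unfolding w_def using a b by (simp add: algebra_simps)
    qed
    have "(\<Sum>j\<in>{1..J}. w j * (2 * exp (- real j))) = (\<Sum>j\<in>{1..J}. 2 * (exp(-(real j/2)) * (exp(1/2) - 1)))"
      by (intro sum.cong refl wj)
    then show ?thesis by (simp add: sum_distrib_left sum_distrib_right)
  qed
  also have "\<dots> \<le> 2" unfolding geom_half by (simp add: not_less)
  finally have "(\<Sum>k\<le>n. P k * exp(Y k / 2)) \<le> exp(1/2) + 2" by simp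
  moreover have "exp(1/2::real) \<le> 3" 
  proof -
    have "exp(1/2::real) \<le> exp 1" by simp
    then show ?thesis using exp_le by linarith
  qed
  ultimately show ?thesis by (simp add: P_def Y_def)
qed



lemma prod_groups:
  fixes S :: "'i \<Rightarrow> 'a set" and f :: "'i \<Rightarrow> ('a \<Rightarrow> 'b) \<Rightarrow> ennreal"
  assumes "finite J" "\<And>i. i\<in>J \<Longrightarrow> finite (S i)" "disjoint_family_on S J"
    "\<And>i \<omega> \<omega>'. i\<in>J \<Longrightarrow> (\<And>x. x\<in>S i \<Longrightarrow> \<omega> x = \<omega>' x) \<Longrightarrow> f i \<omega> = f i \<omega>'"
  shows "(\<integral>\<^sup>+\<omega>. (\<Prod>i\<in>J. f i \<omega>) \<partial>Pi_pmf (\<Union>i\<in>J. S i) d D) = (\<Prod>i\<in>J. \<integral>\<^sup>+\<omega>. f i \<omega> \<partial>Pi_pmf (S i) d D)"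
  using assms
proof (induction J rule: finite_induct)
  case empty
  show ?case by simp
next
  case (insert j J)
  define U where "U = (\<Union>i\<in>J. S i)"
  have finU: "finite U" using insert.hyps(1) insert.prems(1) by (auto simp: U_def)
  have finj: "finite (S j)" using insert.prems(1) by simp
  have disj: "S j \<inter> U = {}" using insert.prems(2) insert.hyps(2)
    unfolding U_def disjoint_family_on_def by auto
  have un: "(\<Union>i\<in>insert j J. S i) = S j \<union> U" by (simp add: U_def)
  define mg where "mg = (\<lambda>(a::'a\<Rightarrow>'b, b::'a\<Rightarrow>'b) x. if x \<in> S j then a x else b x)"
  have fj: "f j (mg (a, b)) = f j a" for a b
    by (rule insert.prems(3)) (auto simp: mg_def)
  have fi: "(\<Prod>i\<in>J. f i (mg (a, b))) = (\<Prod>i\<in>J. f i b)" for a b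
  proof (intro prod.cong refl)
    fix i assume i: "i \<in> J"
    have "S i \<inter> S j = {}" using insert.prems(2) insert.hyps(2) i
      unfolding disjoint_family_on_def by auto
    then show "f i (mg (a, b)) = f i b"
      using i by (intro insert.prems(3)) (auto simp: mg_def)
  qed
  have IH: "(\<integral>\<^sup>+\<omega>. (\<Prod>i\<in>J. f i \<omega>) \<partial>Pi_pmf U d D) = (\<Prod>i\<in>J. \<integral>\<^sup>+\<omega>. f i \<omega> \<partial>Pi_pmf (S i) d D)"
    unfolding U_def
    apply (rule insert.IH)
      apply (meson insert.prems(1) insertCI)
     apply (rule disjoint_family_on_mono[OF _ insert.prems(2)]; blast)
    by (meson insert.prems(3) insertCI)
  have "(\<integral>\<^sup>+\<omega>. (\<Prod>i\<in>insert j J. f i \<omega>) \<partial>Pi_pmf (\<Union>i\<in>insert j J. S i) d D)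
      = (\<integral>\<^sup>+\<omega>. (\<Prod>i\<in>insert j J. f i \<omega>) \<partial>map_pmf mg (pair_pmf (Pi_pmf (S j) d D) (Pi_pmf U d D)))"
    unfolding un mg_def by (subst Pi_pmf_union[OF finj finU disj]) (rule refl)
  also have "\<dots> = (\<integral>\<^sup>+a. \<integral>\<^sup>+b. f j a * (\<Prod>i\<in>J. f i b) \<partial>Pi_pmf U d D \<partial>Pi_pmf (S j) d D)"
    using insert.hyps by (simp add: nn_integral_pair_pmf' fj fi)
  also have "\<dots> = (\<integral>\<^sup>+a. f j a * (\<integral>\<^sup>+b. (\<Prod>i\<in>J. f i b) \<partial>Pi_pmf U d D) \<partial>Pi_pmf (S j) d D)"
    by (simp add: nn_integral_cmult)
  also have "\<dots> = (\<integral>\<^sup>+a. f j a \<partial>Pi_pmf (S j) d D) * (\<integral>\<^sup>+b. (\<Prod>i\<in>J. f i b) \<partial>Pi_pmf U d D)"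
    by (simp add: nn_integral_multc)
  also have "\<dots> = (\<Prod>i\<in>insert j J. \<integral>\<^sup>+\<omega>. f i \<omega> \<partial>Pi_pmf (S i) d D)"
    using insert.hyps IH by simp
  finally show ?case .
qed



lemma gibbs_point:
  fixes m :: nat and s B q :: real
  assumes s: "0 \<le> s" "s \<le> real m" and q: "0<q" "q<1" and B: "0 \<le> B" "B \<le> 1"
    and sB0: "0 < s \<Longrightarrow> 0 < B" and sB1: "s < real m \<Longrightarrow> B < 1"
  shows "real m * bern_kl (s/m) B - real m * bern_kl (s/m) q \<le> s*(q/B - 1) + (real m - s)*((1-q)/(1-B) - 1)"
proof (cases "m = 0")
  case True then show ?thesis using s by (simp add: bern_kl_def)
next
  case False
  then have m0: "real m > 0" by simp
  define x where "x = s / m"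
  have sx: "real m * x = s" using m0 by (simp add: x_def)
  have x01: "0 \<le> x" "x \<le> 1" using s m0 by (auto simp: x_def field_simps)
  have A1: "real m * (if x = 0 then 0 else x * ln (x / B)) - real m * (if x = 0 then 0 else x * ln (x / q)) \<le> s*(q/B - 1)"
  proof (cases "x = 0")
    case True then have "s = 0" using sx by simp
    then show ?thesis using True by simp
  next
    case False
    then have xp: "x > 0" using x01 by simp
    then have sp: "s > 0" using sx m0 by (metis mult_pos_pos)
    then have Bp: "B > 0" by (rule sB0)
    have "real m * (x * ln (x / B)) - real m * (x * ln (x / q)) = s * ln (q / B)"
      using xp Bp q sx[symmetric] by (simp add: ln_div algebra_simps)
    also have "\<dots> \<le> s * (q/B - 1)"
      using sp Bp q by (intro mult_left_mono ln_le_minus_one) auto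
    finally show ?thesis using False by simp
  qed
  have A2: "real m * (if x = 1 then 0 else (1-x) * ln ((1-x) / (1-B))) - real m * (if x = 1 then 0 else (1-x) * ln ((1-x) / (1-q))) \<le> (real m - s)*((1-q)/(1-B) - 1)"
  proof (cases "x = 1")
    case True then have "s = real m" using sx by simp
    then show ?thesis using True by simp
  next
    case False
    then have xp: "1 - x > 0" using x01 by simp
    have sm: "real m - s = real m * (1 - x)" using sx by (simp add: algebra_simps)
    then have sp: "real m - s > 0" using xp m0 by simp
    then have Bp: "1 - B > 0" using sB1 by simp
    have "real m * ((1-x) * ln ((1-x) / (1-B))) - real m * ((1-x) * ln ((1-x) / (1-q)))
       = (real m * (1-x)) * (ln ((1-x) / (1-B)) - ln ((1-x) / (1-q)))" by (simp add: algebra_simps)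
    also have "ln ((1-x) / (1-B)) - ln ((1-x) / (1-q)) = ln ((1-q) / (1-B))"
      using xp Bp q by (simp add: ln_div)
    also have "real m * (1-x) = real m - s" using sm by simp
    finally have "real m * ((1-x) * ln ((1-x) / (1-B))) - real m * ((1-x) * ln ((1-x) / (1-q))) = (real m - s) * ln ((1-q) / (1-B))" .
    also have "\<dots> \<le> (real m - s) * ((1-q)/(1-B) - 1)"
      using sp Bp q by (intro mult_left_mono ln_le_minus_one) auto
    finally show ?thesis using False by simp
  qed
  show ?thesis using A1 A2 unfolding bern_kl_def x_def[symmetric] by (simp add: algebra_simps)
qed

lemma gibbs_sum:
  fixes C :: "'x set" and m :: "'x \<Rightarrow> nat" and s :: "'x \<Rightarrow> real" and q :: real
  assumes fin: "finite C" and s: "\<And>i. i \<in> C \<Longrightarrow> 0 \<le> s i \<and> s i \<le> real (m i)" and q: "0<q" "q<1"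
  shows "(\<Sum>i\<in>C. real (m i) * bern_kl (s i / m i) (sum s C / real (sum m C)))
       \<le> (\<Sum>i\<in>C. real (m i) * bern_kl (s i / m i) q)"
proof -
  define S where "S = sum s C"
  define Mt where "Mt = real (sum m C)"
  define B where "B = S / Mt"
  have SM: "0 \<le> S" "S \<le> Mt" unfolding S_def Mt_def using s
    by (auto intro: sum_nonneg simp: of_nat_sum intro!: sum_mono)
  have B01: "0 \<le> B" "B \<le> 1" using SM by (auto simp: B_def divide_le_eq_1)
  have sB0: "0 < B" if "i \<in> C" "0 < s i" for i
  proof -
    have "s i \<le> S" unfolding S_def using fin that s by (intro member_le_sum) auto
    then show ?thesis using that SM by (simp add: B_def)
  qed
  have sB1: "B < 1" if "i \<in> C" "s i < real (m i)" for i
  proof -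
    have "S < Mt" unfolding S_def Mt_def of_nat_sum using fin that s
      by (intro sum_strict_mono_ex1) auto
    then show ?thesis using SM by (simp add: B_def)
  qed
  have "(\<Sum>i\<in>C. real (m i) * bern_kl (s i / m i) B) - (\<Sum>i\<in>C. real (m i) * bern_kl (s i / m i) q)
      = (\<Sum>i\<in>C. real (m i) * bern_kl (s i / m i) B - real (m i) * bern_kl (s i / m i) q)"
    by (simp add: sum_subtractf)
  also have "\<dots> \<le> (\<Sum>i\<in>C. s i*(q/B - 1) + (real (m i) - s i)*((1-q)/(1-B) - 1))"
    using s q B01 sB0 sB1 by (intro sum_mono gibbs_point) auto
  also have "\<dots> = S*(q/B - 1) + (Mt - S)*((1-q)/(1-B) - 1)"
    by (simp add: S_def Mt_def sum.distrib sum_distrib_right[symmetric] sum_subtractf of_nat_sum)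
  also have "\<dots> \<le> 0"
  proof -
    consider "S = 0" | "S = Mt" "S > 0" | "0 < S" "S < Mt" using SM by linarith
    then show ?thesis
    proof cases
      case 1 then show ?thesis using q SM by (simp add: B_def)
    next
      case 2 then have "B = 1" by (simp add: B_def)
      then show ?thesis using 2 q by (simp add: mult_nonneg_nonpos)
    next
      case 3
      then have "0 < B" "B < 1" by (auto simp: B_def field_simps)
      then have "S*(q/B - 1) + (Mt - S)*((1-q)/(1-B) - 1) = 0" using 3
        by (simp add: B_def field_simps)
      then show ?thesis by simp
    qed
  qed
  finally show ?thesis by (simp add: B_def S_def Mt_def)
qed



definition mm :: "nat \<times> nat \<Rightarrow> nat \<times> nat" where "mm = (\<lambda>(v,v'). (min v v', max v v'))"
definition Eb :: "(nat \<Rightarrow> nat) \<Rightarrow> nat \<Rightarrow> nat \<Rightarrow> nat \<Rightarrow> (nat \<times> nat) set" where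
  "Eb b n l k = mm ` block_pairs b n l k"
definition keyb :: "(nat \<Rightarrow> nat) \<Rightarrow> nat \<times> nat \<Rightarrow> nat \<times> nat" where
  "keyb b e = (min (b (fst e)) (b (snd e)), max (b (fst e)) (b (snd e)))"

lemma bp_mem:
  assumes "(v,v') \<in> block_pairs b n l k" "l \<le> k"
  shows "v \<noteq> v' \<and> v < n \<and> v' < n \<and> keyb b (mm (v,v')) = (l,k)"
  using assms unfolding block_pairs_def block_def keyb_def mm_def
  by (cases "l = k") (auto simp: min_def max_def split: if_splits)

lemma finite_bp: "finite (block_pairs b n l k)"
proof -
  have "block_pairs b n l k \<subseteq> {..<n} \<times> {..<n}"
    unfolding block_pairs_def block_def by auto
  then show ?thesis by (rule finite_subset) auto
qed

lemma finite_Eb: "finite (Eb b n l k)"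
  unfolding Eb_def using finite_bp by simp

lemma inj_mm: "l \<le> k \<Longrightarrow> inj_on mm (block_pairs b n l k)"
  unfolding inj_on_def block_pairs_def block_def mm_def
  by (cases "l = k") (auto simp: min_def max_def split: if_splits)

lemma E_key: "e \<in> Eb b n l k \<Longrightarrow> l \<le> k \<Longrightarrow> keyb b e = (l,k)"
  unfolding Eb_def using bp_mem by fastforce

lemma E_edges: "l \<le> k \<Longrightarrow> Eb b n l k \<subseteq> edges n"
  unfolding Eb_def edges_def mm_def
  by (auto dest!: bp_mem simp: min_def max_def)

lemma E_union:
  assumes "\<And>v. v < n \<Longrightarrow> b v < K"
  shows "(\<Union>x\<in>upairs K. (\<lambda>(l,k). Eb b n l k) x) = edges n"
proof
  show "(\<Union>x\<in>upairs K. (\<lambda>(l,k). Eb b n l k) x) \<subseteq> edges n"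
  proof
    fix e assume "e \<in> (\<Union>x\<in>upairs K. (\<lambda>(l,k). Eb b n l k) x)"
    then obtain l k where "(l,k) \<in> upairs K" "e \<in> Eb b n l k" by auto
    then show "e \<in> edges n" using E_edges[of l k b n] by (auto simp: upairs_def)
  qed
next
  show "edges n \<subseteq> (\<Union>x\<in>upairs K. (\<lambda>(l,k). Eb b n l k) x)"
  proof
    fix e assume e: "e \<in> edges n"
    obtain a c where ac: "e = (a,c)" "a < c" "c < n" using e by (auto simp: edges_def)
    have bK: "b a < K" "b c < K" using ac assms by auto
    define l where "l = min (b a) (b c)"
    define k where "k = max (b a) (b c)"
    have up: "(l,k) \<in> upairs K" using bK by (auto simp: upairs_def l_def k_def)
    have "e \<in> Eb b n l k"
    proof (cases "b a \<le> b c")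
      case True
      then have "(a,c) \<in> block_pairs b n l k" using ac
        by (auto simp: block_pairs_def block_def l_def k_def)
      moreover have "mm (a,c) = e" using ac by (simp add: mm_def)
      ultimately show ?thesis unfolding Eb_def by (metis imageI)
    next
      case False
      then have "(c,a) \<in> block_pairs b n l k" using ac
        by (auto simp: block_pairs_def block_def l_def k_def)
      moreover have "mm (c,a) = e" using ac by (simp add: mm_def)
      ultimately show ?thesis unfolding Eb_def by (metis imageI)
    qed
    then show "e \<in> (\<Union>x\<in>upairs K. (\<lambda>(l,k). Eb b n l k) x)" using up by force
  qed
qed

lemma E_disj: "disjoint_family_on (\<lambda>(l,k). Eb b n l k) (upairs K)"
  unfolding disjoint_family_on_def
proof (intro ballI impI)
  fix x y assume xy: "x \<in> upairs K" "y \<in> upairs K" "x \<noteq> y"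
  obtain l k where x: "x = (l,k)" by (cases x)
  obtain l' k' where y: "y = (l',k')" by (cases y)
  have lk: "l \<le> k" "l' \<le> k'" using xy x y by (auto simp: upairs_def)
  have False if "e \<in> Eb b n l k" "e \<in> Eb b n l' k'" for e
  proof -
    have "keyb b e = (l,k)" by (rule E_key[OF that(1) lk(1)])
    moreover have "keyb b e = (l',k')" by (rule E_key[OF that(2) lk(2)])
    ultimately show False using xy(3) x y by simp
  qed
  then show "(case x of (l,k) \<Rightarrow> Eb b n l k) \<inter> (case y of (l,k) \<Rightarrow> Eb b n l k) = {}"
    using x y by auto
qed

lemma card_E: "l \<le> k \<Longrightarrow> card (Eb b n l k) = npair b n l k"
  unfolding Eb_def npair_def using inj_mm by (simp add: card_image)

lemma adj_sum:
  assumes "l \<le> k"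
  shows "(\<Sum>(v,v')\<in>block_pairs b n l k. adj \<omega> v v') = real (card {e\<in>Eb b n l k. \<omega> e})"
proof -
  have "(\<Sum>(v,v')\<in>block_pairs b n l k. adj \<omega> v v') = (\<Sum>x\<in>block_pairs b n l k. (\<lambda>e. if \<omega> e then 1 else 0) (mm x))"
  proof (intro sum.cong refl)
    fix x assume "x \<in> block_pairs b n l k"
    then show "(case x of (v,v') \<Rightarrow> adj \<omega> v v') = (\<lambda>e. if \<omega> e then 1 else (0::real)) (mm x)"
      using bp_mem[of "fst x" "snd x"] assms by (cases x) (auto simp: adj_def mm_def)
  qed
  also have "\<dots> = (\<Sum>e\<in>Eb b n l k. if \<omega> e then 1 else 0)"
    unfolding Eb_def using inj_mm[OF assms] by (simp add: sum.reindex)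
  also have "\<dots> = real (card {e\<in>Eb b n l k. \<omega> e})"
  proof -
    have "(\<Sum>e\<in>Eb b n l k. if \<omega> e then 1 else (0::real)) = (\<Sum>e\<in>{e\<in>Eb b n l k. \<omega> e}. 1)"
      by (subst sum.inter_filter[OF finite_Eb]) simp
    then show ?thesis by (simp only: sum_constant)
  qed
  finally show ?thesis .
qed



definition Yf :: "(nat \<Rightarrow> nat) \<Rightarrow> nat \<Rightarrow> (nat \<times> nat \<Rightarrow> 'g) \<Rightarrow> ('g \<Rightarrow> real) \<Rightarrow> nat \<times> nat \<Rightarrow> (nat \<times> nat \<Rightarrow> bool) \<Rightarrow> real" where
  "Yf b n g p x \<omega> = (case x of (l,k) \<Rightarrow> real (npair b n l k) *
      bern_kl (real (card {e\<in>Eb b n l k. \<omega> e}) / real (npair b n l k)) (p (g (l,k))))"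

lemma finite_upairs: "finite (upairs K)"
proof -
  have "upairs K \<subseteq> {..<K} \<times> {..<K}" by (auto simp: upairs_def)
  then show ?thesis by (rule finite_subset) auto
qed

lemma card_upairs: "2 * card (upairs K) = K * K + K"
proof (induction K)
  case 0 then show ?case by (simp add: upairs_def)
next
  case (Suc K)
  have un: "upairs (Suc K) = upairs K \<union> (\<lambda>l. (l,K)) ` {..K}" by (auto simp: upairs_def)
  have dj: "upairs K \<inter> (\<lambda>l. (l,K)) ` {..K} = {}" by (auto simp: upairs_def)
  have "card (upairs (Suc K)) = card (upairs K) + card ((\<lambda>l. (l,K)) ` {..K})"
    unfolding un using dj finite_upairs by (intro card_Un_disjoint) auto
  also have "card ((\<lambda>l. (l,K)) ` {..K}) = Suc K" by (subst card_image) (auto simp: inj_on_def)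
  finally show ?case using Suc.IH by simp
qed

lemma det_bound:
  assumes prange: "\<And>\<gamma>. \<gamma> \<in> g ` upairs K \<Longrightarrow> 0 < p \<gamma> \<and> p \<gamma> < 1"
  shows "neg2lambda b n g K \<omega> \<le> 2 * (\<Sum>x\<in>upairs K. Yf b n g p x \<omega>)"
proof -
  define U where "U = upairs K"
  define m where "m = (\<lambda>(l,k). npair b n l k)"
  define s where "s = (\<lambda>(l,k). \<Sum>(v, v')\<in>block_pairs b n l k. adj \<omega> v v')"
  have finU: "finite U" by (simp add: U_def finite_upairs)
  have sm: "0 \<le> s x \<and> s x \<le> real (m x)" if "x \<in> U" for x
  proof -
    obtain l k where x: "x = (l,k)" by (cases x)
    then have lk: "l \<le> k" using that by (simp add: U_def upairs_def)
    have "s x = real (card {e\<in>Eb b n l k. \<omega> e})" using adj_sum[OF lk] by (simp add: s_def x)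
    moreover have "card {e\<in>Eb b n l k. \<omega> e} \<le> card (Eb b n l k)"
      using finite_Eb by (intro card_mono) auto
    ultimately show ?thesis using card_E[OF lk] by (simp add: m_def x)
  qed
  have inner: "(\<Sum>(l, k)\<in>motif_class g K \<gamma>. real (npair b n l k) * bern_kl (Bhat1 b n \<omega> l k) (Bhat0 b n g K \<omega> \<gamma>))
      \<le> (\<Sum>x\<in>motif_class g K \<gamma>. Yf b n g p x \<omega>)" if \<gamma>: "\<gamma> \<in> g ` U" for \<gamma>
  proof -
    define C where "C = motif_class g K \<gamma>"
    have CU: "C \<subseteq> U" by (auto simp: C_def motif_class_def U_def)
    have finC: "finite C" using CU finU by (rule finite_subset)
    have q: "0 < p \<gamma>" "p \<gamma> < 1" using prange \<gamma> by (auto simp: U_def)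
    have "(\<Sum>(l, k)\<in>C. real (npair b n l k) * bern_kl (Bhat1 b n \<omega> l k) (Bhat0 b n g K \<omega> \<gamma>))
        = (\<Sum>i\<in>C. real (m i) * bern_kl (s i / m i) (sum s C / real (sum m C)))"
      by (intro sum.cong refl) (auto simp: m_def s_def Bhat1_def Bhat0_def n_gamma_def C_def)
    also have "\<dots> \<le> (\<Sum>i\<in>C. real (m i) * bern_kl (s i / m i) (p \<gamma>))"
      using sm CU by (intro gibbs_sum[OF finC _ q]) auto
    also have "\<dots> = (\<Sum>x\<in>C. Yf b n g p x \<omega>)"
    proof (intro sum.cong refl)
      fix x assume xC: "x \<in> C"
      obtain l k where x: "x = (l,k)" by (cases x)
      have lk: "l \<le> k" and gx: "g (l,k) = \<gamma>" using xC x by (auto simp: C_def motif_class_def upairs_def)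
      show "real (m x) * bern_kl (s x / m x) (p \<gamma>) = Yf b n g p x \<omega>"
        using adj_sum[OF lk] gx by (simp add: Yf_def m_def s_def x)
    qed
    finally show ?thesis by (simp add: C_def)
  qed
  have "neg2lambda b n g K \<omega> \<le> 2 * (\<Sum>\<gamma>\<in>g ` U. \<Sum>x\<in>motif_class g K \<gamma>. Yf b n g p x \<omega>)"
    unfolding neg2lambda_def U_def[symmetric] using inner by (simp add: sum_mono)
  also have "(\<Sum>\<gamma>\<in>g ` U. \<Sum>x\<in>motif_class g K \<gamma>. Yf b n g p x \<omega>) = (\<Sum>x\<in>U. Yf b n g p x \<omega>)"
    using sum.image_gen[OF finU, of "\<lambda>x. Yf b n g p x \<omega>" g]
    by (simp add: motif_class_def U_def)
  finally show ?thesis by (simp add: U_def)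
qed



lemma block_mgf:
  assumes lk: "l \<le> k" and q: "0 < p (g (l,k))" "p (g (l,k)) < 1"
  shows "(\<integral>\<^sup>+\<omega>. ennreal (exp (Yf b n g p (l,k) \<omega> / 2))
      \<partial>Pi_pmf (Eb b n l k) False (\<lambda>(v, v'). bernoulli_pmf (p (g (min (b v) (b v'), max (b v) (b v')))))) \<le> 5"
proof -
  define q' where "q' = p (g (l,k))"
  define m where "m = npair b n l k"
  define A where "A = Eb b n l k"
  define h where "h c = ennreal (exp (real m * bern_kl (real c / real m) q' / 2))" for c :: nat
  have cA: "card A = m" using card_E[OF lk] by (simp add: A_def m_def)
  have finA: "finite A" by (simp add: A_def finite_Eb)
  have "Pi_pmf (Eb b n l k) False (\<lambda>(v, v'). bernoulli_pmf (p (g (min (b v) (b v'), max (b v) (b v')))))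
      = Pi_pmf A False (\<lambda>_. bernoulli_pmf q')"
  proof (rule Pi_pmf_cong)
    fix e assume e: "e \<in> Eb b n l k"
    have "keyb b e = (l,k)" by (rule E_key[OF e lk])
    then show "(\<lambda>(v, v'). bernoulli_pmf (p (g (min (b v) (b v'), max (b v) (b v'))))) e = bernoulli_pmf q'"
      by (cases e) (simp add: keyb_def q'_def)
  qed (simp_all add: A_def)
  then have "(\<integral>\<^sup>+\<omega>. ennreal (exp (Yf b n g p (l,k) \<omega> / 2))
      \<partial>Pi_pmf (Eb b n l k) False (\<lambda>(v, v'). bernoulli_pmf (p (g (min (b v) (b v'), max (b v) (b v'))))))
      = (\<integral>\<^sup>+\<omega>. h (card {e\<in>A. \<omega> e}) \<partial>Pi_pmf A False (\<lambda>_. bernoulli_pmf q'))"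
    by (simp add: Yf_def h_def A_def m_def q'_def)
  also have "\<dots> = (\<integral>\<^sup>+c. h c \<partial>map_pmf (\<lambda>f. card {x\<in>A. f x}) (Pi_pmf A False (\<lambda>_. bernoulli_pmf q')))"
    by simp
  also have "map_pmf (\<lambda>f. card {x\<in>A. f x}) (Pi_pmf A False (\<lambda>_. bernoulli_pmf q')) = binomial_pmf m q'"
    using q by (intro binomial_pmf_altdef'[symmetric] finA cA) (auto simp: q'_def)
  also have "(\<integral>\<^sup>+c. h c \<partial>binomial_pmf m q') = (\<Sum>c\<in>{..m}. h c * pmf (binomial_pmf m q') c)"
    using q by (subst nn_integral_measure_pmf_finite) (auto simp: q'_def)
  also have "\<dots> = ennreal (\<Sum>c\<le>m. real (m choose c) * q'^c * (1-q')^(m-c) * exp(m * bern_kl (c/m) q' / 2))"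
    using q by (simp add: h_def q'_def ennreal_mult'' sum_ennreal[symmetric] mult.commute mult.left_commute)
  also have "\<dots> \<le> ennreal 5"
    using mgf[of q' m] q by (intro ennreal_leI) (simp add: q'_def)
  finally show ?thesis by simp
qed



lemma main_bound:
  assumes brange: "\<And>v. v < n \<Longrightarrow> b v < K"
    and prange: "\<And>\<gamma>. \<gamma> \<in> g ` upairs K \<Longrightarrow> 0 < p \<gamma> \<and> p \<gamma> < 1"
  shows "measure_pmf.prob (null_law b g p n) {\<omega>. T \<le> (\<Sum>x\<in>upairs K. Yf b n g p x \<omega>)}
     \<le> exp(-T/2) * 5 ^ card (upairs K)"
proof -
  define D where "D = (\<lambda>(v::nat, v'::nat). bernoulli_pmf (p (g (min (b v) (b v'), max (b v) (b v')))))"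
  define F where "F = (\<lambda>(l,k). Eb b n l k)"
  define U where "U = upairs K"
  define A where "A = {\<omega>. T \<le> (\<Sum>x\<in>U. Yf b n g p x \<omega>)}"
  define Q where "Q = null_law b g p n"
  have finU: "finite U" by (simp add: U_def finite_upairs)
  have Q: "Q = Pi_pmf (\<Union>x\<in>U. F x) False D"
    unfolding Q_def null_law_def D_def F_def U_def using E_union[of n b K] brange by simp
  have "emeasure (measure_pmf Q) A = (\<integral>\<^sup>+\<omega>. indicator A \<omega> \<partial>Q)" by simp
  also have "\<dots> \<le> (\<integral>\<^sup>+\<omega>. ennreal (exp(-T/2)) * (\<Prod>x\<in>U. ennreal (exp (Yf b n g p x \<omega> / 2))) \<partial>Q)"
  proof (intro nn_integral_mono)
    fix \<omega>
    have "ennreal (exp(-T/2)) * (\<Prod>x\<in>U. ennreal (exp (Yf b n g p x \<omega> / 2)))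
        = ennreal (exp(-T/2) * (\<Prod>x\<in>U. exp (Yf b n g p x \<omega> / 2)))"
      by (simp add: prod_ennreal ennreal_mult[symmetric] prod_nonneg)
    also have "exp(-T/2) * (\<Prod>x\<in>U. exp (Yf b n g p x \<omega> / 2)) = exp (((\<Sum>x\<in>U. Yf b n g p x \<omega>) - T) / 2)"
      using finU by (simp add: exp_sum[symmetric] exp_add[symmetric] sum_divide_distrib[symmetric] diff_divide_distrib)
    finally have eq: "ennreal (exp(-T/2)) * (\<Prod>x\<in>U. ennreal (exp (Yf b n g p x \<omega> / 2))) = ennreal (exp (((\<Sum>x\<in>U. Yf b n g p x \<omega>) - T) / 2))" .
    show "indicator A \<omega> \<le> ennreal (exp(-T/2)) * (\<Prod>x\<in>U. ennreal (exp (Yf b n g p x \<omega> / 2)))"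
    proof (cases "\<omega> \<in> A")
      case True
      then have "1 \<le> exp (((\<Sum>x\<in>U. Yf b n g p x \<omega>) - T) / 2)" by (simp add: A_def)
      then show ?thesis unfolding eq using True by (simp add: ennreal_leI)
    next
      case False then show ?thesis by simp
    qed
  qed
  also have "\<dots> = ennreal (exp(-T/2)) * (\<integral>\<^sup>+\<omega>. (\<Prod>x\<in>U. ennreal (exp (Yf b n g p x \<omega> / 2))) \<partial>Q)"
    by (simp add: nn_integral_cmult)
  also have "(\<integral>\<^sup>+\<omega>. (\<Prod>x\<in>U. ennreal (exp (Yf b n g p x \<omega> / 2))) \<partial>Q)
      = (\<Prod>x\<in>U. \<integral>\<^sup>+\<omega>. ennreal (exp (Yf b n g p x \<omega> / 2)) \<partial>Pi_pmf (F x) False D)"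
    unfolding Q
  proof (rule prod_groups[OF finU])
    show "\<And>i. i \<in> U \<Longrightarrow> finite (F i)" by (auto simp: F_def finite_Eb)
    show "disjoint_family_on F U" unfolding F_def U_def by (rule E_disj)
    fix i and \<omega> \<omega>' :: "nat \<times> nat \<Rightarrow> bool" assume i: "i \<in> U" and agree: "\<And>x. x \<in> F i \<Longrightarrow> \<omega> x = \<omega>' x"
    obtain l k where ilk: "i = (l,k)" by (cases i)
    have "{e\<in>Eb b n l k. \<omega> e} = {e\<in>Eb b n l k. \<omega>' e}" using agree by (auto simp: F_def ilk)
    then show "ennreal (exp (Yf b n g p i \<omega> / 2)) = ennreal (exp (Yf b n g p i \<omega>' / 2))"
      by (simp add: Yf_def ilk)
  qed
  also have "\<dots> \<le> (\<Prod>x\<in>U. (5::ennreal))"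
  proof (intro prod_mono_ennreal)
    fix x assume x: "x \<in> U"
    obtain l k where xlk: "x = (l,k)" by (cases x)
    have lk: "l \<le> k" using x by (simp add: U_def upairs_def xlk)
    have q: "0 < p (g (l,k))" "p (g (l,k)) < 1" using prange x by (auto simp: U_def xlk)
    show "(\<integral>\<^sup>+\<omega>. ennreal (exp (Yf b n g p x \<omega> / 2)) \<partial>Pi_pmf (F x) False D) \<le> 5"
      using block_mgf[of l k p g b n, OF lk q] by (simp add: xlk F_def D_def)
  qed
  finally have "emeasure (measure_pmf Q) A \<le> ennreal (exp(-T/2)) * 5 ^ card U"
    by (simp only: prod_constant) (erule meta_mp; rule mult_left_mono; simp)
  also have "\<dots> = ennreal (exp(-T/2) * 5 ^ card U)" by (simp add: ennreal_mult flip: ennreal_power)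
  finally have "ennreal (measure_pmf.prob Q A) \<le> ennreal (exp(-T/2) * 5 ^ card U)"
    by (simp add: measure_pmf.emeasure_eq_measure)
  then show ?thesis by (simp add: Q_def A_def U_def ennreal_le_iff)
qed



theorem theorem2:
  fixes K :: "nat \<Rightarrow> nat"
    and blk :: "nat \<Rightarrow> nat \<Rightarrow> nat"
    and gam :: "nat \<Rightarrow> nat \<times> nat \<Rightarrow> 'g"
    and p0 :: "nat \<Rightarrow> 'g \<Rightarrow> real"
    and n0 :: nat and c1 c2 :: real
  assumes blocks_range: "\<And>n v. v < n \<Longrightarrow> blk n v < K n"
    and blocks_nonempty: "\<And>n l. l < K n \<Longrightarrow> block (blk n) n l \<noteq> {}"
    and p0_range: "\<And>n \<gamma>. \<gamma> \<in> gam n ` upairs (K n) \<Longrightarrow> 0 < p0 n \<gamma> \<and> p0 n \<gamma> < 1"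
    and c1: "0 < c1" "c1 < 1/2"
    and lower: "\<And>n l k. n > n0 \<Longrightarrow> (l, k) \<in> upairs (K n) \<Longrightarrow>
        p0 n (gam n (l, k)) > ln (real (npair (blk n) n l k)) / real (npair (blk n) n l k)"
    and upper: "\<And>n l k. n > n0 \<Longrightarrow> (l, k) \<in> upairs (K n) \<Longrightarrow>
        p0 n (gam n (l, k)) < 1/2 - c1"
    and c2: "0 < c2"
      "\<And>n. n > n0 \<Longrightarrow> c2 \<le> (1/16) * (1 - 2 * real (card (gam n ` upairs (K n)))
                                         / (real (K n)^2 + real (K n)))"
  shows "\<exists>C N. \<forall>n\<ge>N.
           measure_pmf.prob (null_law (blk n) (gam n) (p0 n) n)
             {\<omega>. Delta_BIC (blk n) n (gam n) (K n) \<omega> < 0}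
           \<ge> 1 - C * exp (- (real (K n)^2 + real (K n))
                         - c2 * ln (real (nmin (blk n) n (K n))) / (2 + 2 * sqrt c2 / 3))"
proof -
  define N where "N = max (n0 + 1) (nat \<lceil>exp (4/c2)\<rceil> + 3)"
  have "measure_pmf.prob (null_law (blk n) (gam n) (p0 n) n)
             {\<omega>. Delta_BIC (blk n) n (gam n) (K n) \<omega> < 0}
           \<ge> 1 - 1 * exp (- (real (K n)^2 + real (K n))
                         - c2 * ln (real (nmin (blk n) n (K n))) / (2 + 2 * sqrt c2 / 3))"
    if nN: "n \<ge> N" for n
  proof -
    define b where "b = blk n"
    define Kn where "Kn = K n"
    define g where "g = gam n"
    define p where "p = p0 n"
    define U where "U = upairs Kn"
    define M where "M = card U"
    define G where "G = card (g ` U)"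
    define L where "L = ln (real (n choose 2))"
    define d where "d = (\<Sum>\<gamma>\<in>g ` U. real (card (motif_class g Kn \<gamma>)) - 1)"
    define Q where "Q = null_law b g p n"
    define c2' where "c2' = c2 / (2 + 2 * sqrt c2 / 3)"
    define nm where "nm = nmin b n Kn"
    have finU: "finite U" by (simp add: U_def finite_upairs)
    have nn0: "n > n0" and n3: "n \<ge> 3" and nexp: "real n \<ge> exp (4/c2)"
    proof -
      show "n > n0" "n \<ge> 3" using nN unfolding N_def by auto
      have "real (nat \<lceil>exp (4/c2)\<rceil>) \<le> real n" using nN unfolding N_def by auto
      moreover have "exp (4/c2) \<le> real (nat \<lceil>exp (4/c2)\<rceil>)" by (rule real_nat_ceiling_ge)
      ultimately show "real n \<ge> exp (4/c2)" by linarith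
    qed
    have brange: "\<And>v. v < n \<Longrightarrow> b v < Kn" using blocks_range by (simp add: b_def Kn_def)
    have prange: "\<And>\<gamma>. \<gamma> \<in> g ` U \<Longrightarrow> 0 < p \<gamma> \<and> p \<gamma> < 1"
      using p0_range by (simp add: p_def g_def U_def Kn_def)
    have K1: "Kn \<ge> 1" using brange[of 0] n3 by simp
    have M2: "2 * M = Kn * Kn + Kn" using card_upairs by (simp add: M_def U_def)
    have M1: "M \<ge> 1" using M2 K1 by (cases M) auto
    have sumcard: "(\<Sum>\<gamma>\<in>g ` U. real (card (motif_class g Kn \<gamma>))) = real M"
    proof -
      have "real M = (\<Sum>x\<in>U. 1)" by (simp add: M_def)
      also have "\<dots> = (\<Sum>\<gamma>\<in>g ` U. \<Sum>x\<in>{x. x \<in> U \<and> g x = \<gamma>}. 1)"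
        by (rule sum.image_gen[OF finU])
      also have "\<dots> = (\<Sum>\<gamma>\<in>g ` U. real (card (motif_class g Kn \<gamma>)))"
        by (simp add: motif_class_def U_def)
      finally show ?thesis by simp
    qed
    have dMG: "d = real M - real G"
      unfolding d_def G_def using finU by (simp add: sum_subtractf sumcard)
    have c2b: "c2 \<le> (1/16) * (1 - 2 * real G / (real Kn^2 + real Kn))"
      using c2(2)[OF nn0] by (simp add: G_def g_def U_def Kn_def)
    have KM: "real Kn^2 + real Kn = 2 * real M"
    proof -
      have "real (2 * M) = real (Kn * Kn + Kn)" using M2 by simp
      then show ?thesis by (simp add: power2_eq_square)
    qed
    have d16: "16 * c2 * real M \<le> d"
    proof -
      have "c2 \<le> (1/16) * (1 - real G / real M)" using c2b KM by simp
      then have "16 * c2 * real M \<le> (1 - real G / real M) * real M"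
        using M1 by (simp add: mult_right_mono)
      also have "\<dots> = real M - real G" using M1 by (simp add: field_simps)
      finally show ?thesis by (simp add: dMG)
    qed
    have nch: "real n \<le> real (n choose 2)"
    proof -
      have "n * 2 \<le> n * (n - 1)" using n3 by simp
      then have "n \<le> n * (n - 1) div 2" by linarith
      then show ?thesis by (simp add: choose_two)
    qed
    have npos: "real n > 0" using n3 by simp
    have L4: "4 / c2 \<le> L"
    proof -
      have "4 / c2 = ln (exp (4/c2))" by simp
      also have "\<dots> \<le> ln (real n)" using nexp npos by (subst ln_le_cancel_iff) auto
      also have "\<dots> \<le> L" unfolding L_def using nch npos n3 by (subst ln_le_cancel_iff) auto
      finally show ?thesis .
    qed
    have c2L: "4 \<le> c2 * L" using L4 c2(1) by (simp add: field_simps)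
    have L0: "0 \<le> L" using L4 c2(1) by (smt (verit) divide_pos_pos)
    have lnL: "ln (real n) \<le> L" unfolding L_def using nch npos n3 by (subst ln_le_cancel_iff) auto
    have nm_le: "nm \<le> n * n"
    proof -
      have ne: "U \<noteq> {}" using M1 by (auto simp: M_def)
      have "nm \<in> (\<lambda>(l, k). npair b n l k) ` U"
        unfolding nm_def nmin_def U_def using finU ne by (intro Min_in) (auto simp: U_def)
      then obtain l k where "nm = npair b n l k" by auto
      moreover have "block_pairs b n l k \<subseteq> {..<n} \<times> {..<n}" by (auto simp: block_pairs_def block_def)
      then have "card (block_pairs b n l k) \<le> card ({..<n} \<times> {..<n})" by (intro card_mono) auto
      ultimately show ?thesis by (simp add: npair_def card_cartesian_product)
    qed
    have lnm: "0 \<le> ln (real nm) \<and> ln (real nm) \<le> 2 * L"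
    proof (cases "nm = 0")
      case True then show ?thesis using L0 by simp
    next
      case False
      then have "ln (real nm) \<le> ln (real n * real n)" using nm_le n3
        by (subst ln_le_cancel_iff) (auto simp flip: of_nat_mult)
      also have "\<dots> = 2 * ln (real n)" using npos by (simp add: ln_mult)
      finally show ?thesis using lnL False by simp
    qed
    have c2'b: "0 \<le> c2' \<and> c2' \<le> c2 / 2"
    proof -
      have "2 \<le> 2 + 2 * sqrt c2 / 3" using c2(1) by simp
      then have "c2 / (2 + 2 * sqrt c2 / 3) \<le> c2 / 2" using c2(1)
        by (intro divide_left_mono) (auto intro: add_pos_nonneg)
      moreover have "0 \<le> c2 / (2 + 2 * sqrt c2 / 3)" using c2(1) by simp
      ultimately show ?thesis unfolding c2'_def by simp
    qed
    have cn: "c2' * ln (real nm) \<le> c2 * L"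
    proof -
      have "c2' * ln (real nm) \<le> (c2/2) * (2 * L)" using c2'b lnm by (intro mult_mono) auto
      then show ?thesis by simp
    qed
    define Yset where "Yset = {\<omega>. d * L / 2 \<le> (\<Sum>x\<in>U. Yf b n g p x \<omega>)}"
    have sub: "{\<omega>. \<not> Delta_BIC b n g Kn \<omega> < 0} \<subseteq> Yset"
    proof
      fix \<omega> assume "\<omega> \<in> {\<omega>. \<not> Delta_BIC b n g Kn \<omega> < 0}"
      then have "d * L \<le> neg2lambda b n g Kn \<omega>"
        by (simp add: Delta_BIC_def d_def L_def U_def)
      also have "\<dots> \<le> 2 * (\<Sum>x\<in>U. Yf b n g p x \<omega>)"
        unfolding U_def by (rule det_bound) (use prange in \<open>simp add: U_def\<close>)
      finally show "\<omega> \<in> Yset" by (simp add: Yset_def)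
    qed
    have pY: "measure_pmf.prob Q Yset \<le> exp(-(d*L/2)/2) * 5 ^ M"
      unfolding Q_def Yset_def M_def U_def
      by (rule main_bound) (use brange prange in \<open>auto simp: U_def\<close>)
    have "measure_pmf.prob Q {\<omega>. \<not> Delta_BIC b n g Kn \<omega> < 0} \<le> measure_pmf.prob Q Yset"
      using sub by (intro measure_pmf.finite_measure_mono) auto
    also have "\<dots> \<le> exp(-(d*L/2)/2) * 5 ^ M" by (rule pY)
    also have "\<dots> = exp(-(d*L/4) + real M * ln 5)"
      by (simp add: pow_exp_ln flip: exp_add)
    also have "\<dots> \<le> exp (- (real Kn^2 + real Kn) - c2' * ln (real nm))"
    proof (subst exp_le_cancel_iff)
      have ln5: "ln (5::real) \<le> 4" using ln_le_minus_one[of 5] by simp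
      have a0: "(16 * c2 * real M) * L \<le> d * L" using d16 L0 by (rule mult_right_mono)
      have a: "4 * c2 * real M * L \<le> d * L / 4" using a0 by simp
      have b1: "c2 * L * real M \<ge> 4 * real M" using c2L M1 by (intro mult_right_mono) auto
      have b2: "c2 * L * real M \<ge> c2 * L * 1" using c2L M1 by (intro mult_left_mono) auto
      have "real M * ln 5 \<le> real M * 4" using ln5 M1 by (intro mult_left_mono) auto
      then show "-(d*L/4) + real M * ln 5 \<le> - (real Kn^2 + real Kn) - c2' * ln (real nm)"
        using a b1 b2 cn KM by (simp add: algebra_simps)
    qed
    finally have bad: "measure_pmf.prob Q {\<omega>. \<not> Delta_BIC b n g Kn \<omega> < 0}
        \<le> exp (- (real Kn^2 + real Kn) - c2' * ln (real nm))" .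
    have "measure_pmf.prob Q {\<omega>. Delta_BIC b n g Kn \<omega> < 0}
        = 1 - measure_pmf.prob Q {\<omega>. \<not> Delta_BIC b n g Kn \<omega> < 0}"
    proof -
      have "{\<omega>. Delta_BIC b n g Kn \<omega> < 0} = space (measure_pmf Q) - {\<omega>. \<not> Delta_BIC b n g Kn \<omega> < 0}"
        by auto
      then show ?thesis using measure_pmf.prob_compl[of "{\<omega>. \<not> Delta_BIC b n g Kn \<omega> < 0}" Q] by simp
    qed
    then have "measure_pmf.prob Q {\<omega>. Delta_BIC b n g Kn \<omega> < 0} \<ge> 1 - exp (- (real Kn^2 + real Kn) - c2' * ln (real nm))"
      using bad by simp
    then show ?thesis
      by (simp add: Q_def b_def g_def p_def Kn_def c2'_def nm_def)
  qed
  then show ?thesis by blast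
qed

end
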